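(* Let $n\ge 4$ and let $x,y$ be pyramidal tours in $K_n$. The vertices $x^{v}$ and $y^{v}$ of $\mathrm{PYR}(n)$ are not adjacent (i.e. the segment $[x^v,y^v]$ is not an edge, one-dimensional face, of $\mathrm{PYR}(n)$) if and only if there exists a pyramidal tour $z\in PT_n$, different from both $x$ and $y$, all of whose edges are edges of $x$ or of $y$.
   Context: Let $K_n$ be the complete undirected graph on vertex set $\{1,\dots,n\}$ with edge set $E$. A Hamiltonian cycle $\langle 1,i_1,\dots,i_r,n,j_1,\dots,j_{n-r-2}\rangle$ is called a pyramidal tour if $i_1<i_2<\dots<i_r$ and $j_1>j_2>\dots>j_{n-r-2}$ (the tour leaves city $1$, visits some cities in increasing order, reaches city $n$, and returns to $1$ visiting the remaining cities in decreasing order); tours are undirected. Let $PT_n$ be the set of all pyramidal tours. For $x\in PT_n$ its characteristic vector $x^v\in\mathbb{R}^E$ has $x^v_e=1$ if edge $e$ lies in $x$ and $0$ otherwise. The pyramidal tours polytope is $\mathrm{PYR}(n)=\operatorname{conv}\{x^v : x\in PT_n\}$; its vertices are exactly the vectors $x^v$, $x\in PT_n$. *)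

theory Defs
  imports "HOL-Analysis.Analysis" "HOL-Library.Function_Algebras"
begin

text \<open>Pointwise real vector space structure on functions, so that R^E can be
  represented by functions from edges (2-element vertex sets) to reals.\<close>

instantiation "fun" :: (type, real_vector) real_vector
begin
definition scaleR_fun :: "real \<Rightarrow> ('a \<Rightarrow> 'b) \<Rightarrow> 'a \<Rightarrow> 'b"
  where "scaleR_fun r f = (\<lambda>x. r *\<^sub>R f x)"
instance
  by standard (auto simp: scaleR_fun_def fun_eq_iff scaleR_add_right scaleR_add_left)
end

definition pyramidal_seq :: "nat \<Rightarrow> nat list \<Rightarrow> bool" where
  "pyramidal_seq n t \<longleftrightarrow>
     length t = n \<and> distinct t \<and> set t = {1..n} \<and> t ! 0 = 1 \<and>
     (\<exists>r. r + 1 < n \<and> t ! (r + 1) = n \<and>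
          sorted_wrt (<) (take r (drop 1 t)) \<and>
          sorted_wrt (>) (drop (r + 2) t))"

definition tour_edges :: "nat list \<Rightarrow> nat set set" where
  "tour_edges t = {{t ! i, t ! ((i + 1) mod length t)} | i. i < length t}"

text \<open>Tours are undirected cycles, hence identified with their edge sets.
  PT_n is the set of pyramidal tours.\<close>
definition PT :: "nat \<Rightarrow> nat set set set" where
  "PT n = {tour_edges t | t. pyramidal_seq n t}"

definition char_vec :: "nat set set \<Rightarrow> (nat set \<Rightarrow> real)" where
  "char_vec x = (\<lambda>e. if e \<in> x then 1 else 0)"

definition PYR :: "nat \<Rightarrow> (nat set \<Rightarrow> real) set" where
  "PYR n = convex hull (char_vec ` PT n)"

end

theory Submission
  imports Defs
begin


definition Dcond :: "nat \<Rightarrow> (nat \<Rightarrow> bool) \<Rightarrow> nat \<Rightarrow> nat \<Rightarrow> bool" where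
  "Dcond n d a b \<longleftrightarrow> (b = Suc a \<and> (a = 1 \<or> a = n - 1 \<or> \<not> d a)) \<or>
     (Suc (Suc a) \<le> b \<and> d a \<and> d (b - 1) \<and> (\<forall>j. a < j \<and> j < b - 1 \<longrightarrow> \<not> d j))"

lemma Dcond_cong:
  assumes "Suc (Suc a) \<le> b" "\<And>k. a \<le> k \<Longrightarrow> k \<le> b - 1 \<Longrightarrow> h k = h' k"
  shows "Dcond n h a b = Dcond n h' a b"
  using assms unfolding Dcond_def by auto

lemma Dcond_long:
  assumes "Suc (Suc a) \<le> b"
  shows "Dcond n h a b \<longleftrightarrow> h a \<and> h (b - 1) \<and> (\<forall>j. a < j \<and> j < b - 1 \<longrightarrow> \<not> h j)"
  using assms unfolding Dcond_def by auto

lemma Dcond_short: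
  shows "Dcond n h a (Suc a) \<longleftrightarrow> (a = 1 \<or> a = n - 1 \<or> \<not> h a)"
  unfolding Dcond_def by auto

lemma prev_one:
  assumes "f (1::nat)" "1 < k"
  shows "\<exists>p. 1 \<le> p \<and> p < k \<and> f p \<and> (\<forall>j. p < j \<and> j < k \<longrightarrow> \<not> f j)"
proof -
  let ?S = "{j. 1 \<le> j \<and> j < k \<and> f j}"
  have fin: "finite ?S" by (rule finite_subset[of _ "{..<k}"]) auto
  have ne: "1 \<in> ?S" using assms by auto
  define p where "p = Max ?S"
  have "p \<in> ?S" unfolding p_def using fin ne Max_in by blast
  moreover have "\<forall>j. p < j \<and> j < k \<longrightarrow> \<not> f j"
  proof (intro allI impI notI)
    fix j assume "p < j \<and> j < k" "f j"
    then have "j \<in> ?S" using \<open>p \<in> ?S\<close> by auto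
    then have "j \<le> p" unfolding p_def using Max_ge[OF fin] by blast
    then show False using \<open>p < j \<and> j < k\<close> by simp
  qed
  ultimately show ?thesis by blast
qed

lemma next_one:
  assumes "f (m::nat)" "k < m"
  shows "\<exists>q. k < q \<and> q \<le> m \<and> f q \<and> (\<forall>j. k < j \<and> j < q \<longrightarrow> \<not> f j)"
proof -
  let ?S = "{j. k < j \<and> j \<le> m \<and> f j}"
  have fin: "finite ?S" by (rule finite_subset[of _ "{..m}"]) auto
  have ne: "m \<in> ?S" using assms by auto
  define q where "q = Min ?S"
  have "q \<in> ?S" unfolding q_def using fin ne Min_in by blast
  moreover have "\<forall>j. k < j \<and> j < q \<longrightarrow> \<not> f j"
  proof (intro allI impI notI)
    fix j assume "k < j \<and> j < q" "f j"
    then have "j \<in> ?S" using \<open>q \<in> ?S\<close> by auto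
    then have "q \<le> j" unfolding q_def using Min_le[OF fin] by blast
    then show False using \<open>k < j \<and> j < q\<close> by simp
  qed
  ultimately show ?thesis by blast
qed


lemma const_interval:
  assumes "\<And>j. l \<le> j \<Longrightarrow> j < r \<Longrightarrow> s j = s (Suc j)"
  shows "l \<le> c \<Longrightarrow> c \<le> r \<Longrightarrow> s c = (s l :: bool)"
proof (induction c)
  case 0 then show ?case by simp
next
  case (Suc c)
  show ?case
  proof (cases "l \<le> c")
    case True
    then have "s c = s l" using Suc by simp
    moreover have "s c = s (Suc c)" using assms[of c] True Suc.prems by simp
    ultimately show ?thesis by simp
  next
    case False
    then have "Suc c = l" using Suc.prems by simp
    then show ?thesis by simp
  qed
qed

lemma label_Dcond:
  fixes s :: "nat \<Rightarrow> bool"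
  assumes ab: "1 \<le> a" "a < b" "b \<le> n" and n3: "3 \<le> n"
  shows "(\<exists>\<sigma>. (a = 1 \<or> s a = \<sigma>) \<and> (b = n \<or> s b = \<sigma>) \<and> (\<forall>c. a < c \<and> c < b \<longrightarrow> s c \<noteq> \<sigma>))
     \<longleftrightarrow> Dcond n (\<lambda>k. k = 1 \<or> k = n - 1 \<or> s k \<noteq> s (Suc k)) a b"
    (is "?L \<longleftrightarrow> Dcond n ?d a b")
proof (cases "b = Suc a")
  case True
  have "?L \<longleftrightarrow> a = 1 \<or> Suc a = n \<or> s a = s (Suc a)"
  proof
    assume ?L
    then obtain \<sigma> where "(a = 1 \<or> s a = \<sigma>)" "(b = n \<or> s b = \<sigma>)" by blast
    then show "a = 1 \<or> Suc a = n \<or> s a = s (Suc a)" using True by auto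
  next
    assume h: "a = 1 \<or> Suc a = n \<or> s a = s (Suc a)"
    show ?L
    proof (cases "a = 1")
      case True
      then show ?thesis using \<open>b = Suc a\<close> by (intro exI[of _ "s b"]) auto
    next
      case False
      then show ?thesis using \<open>b = Suc a\<close> h by (intro exI[of _ "s a"]) auto
    qed
  qed
  also have "\<dots> \<longleftrightarrow> Dcond n ?d a b" using ab unfolding True Dcond_short by auto
  finally show ?thesis .
next
  case False
  then have ab2: "Suc (Suc a) \<le> b" using ab by linarith
  show ?thesis
  proof
    assume ?L
    then obtain \<sigma> where sa: "a = 1 \<or> s a = \<sigma>" and sb: "b = n \<or> s b = \<sigma>"
      and sc: "\<forall>c. a < c \<and> c < b \<longrightarrow> s c \<noteq> \<sigma>" by blast
    have "?d a"
    proof (cases "a = 1")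
      case False
      then have "s a = \<sigma>" using sa by simp
      moreover have "s (Suc a) \<noteq> \<sigma>" using sc ab2 by auto
      ultimately show ?thesis by auto
    qed simp
    moreover have "?d (b - 1)"
    proof (cases "b = n")
      case False
      then have "s b = \<sigma>" using sb by simp
      moreover have "s (b - 1) \<noteq> \<sigma>" using sc ab2 by auto
      moreover have "Suc (b - 1) = b" using ab2 by simp
      ultimately show ?thesis by auto
    qed simp
    moreover have "\<forall>j. a < j \<and> j < b - 1 \<longrightarrow> \<not> ?d j"
    proof (intro allI impI)
      fix j assume j: "a < j \<and> j < b - 1"
      then have "s j \<noteq> \<sigma>" "s (Suc j) \<noteq> \<sigma>" using sc by auto
      moreover have "j \<noteq> 1" "j \<noteq> n - 1" using j ab by linarith+
      ultimately show "\<not> ?d j" by auto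
    qed
    ultimately show "Dcond n ?d a b" using ab2 by (simp add: Dcond_long)
  next
    assume "Dcond n ?d a b"
    then have da: "?d a" and db: "?d (b - 1)" and dj: "\<forall>j. a < j \<and> j < b - 1 \<longrightarrow> \<not> ?d j"
      using ab2 by (simp_all add: Dcond_long)
    have const: "\<And>c. Suc a \<le> c \<Longrightarrow> c \<le> b - 1 \<Longrightarrow> s c = s (Suc a)"
    proof -
      fix c assume "Suc a \<le> c" "c \<le> b - 1"
      show "s c = s (Suc a)"
      proof (rule const_interval[of "Suc a" "b - 1" s c])
        fix j assume "Suc a \<le> j" "j < b - 1"
        then show "s j = s (Suc j)" using dj by auto
      qed fact+
    qed
    show ?L
    proof (intro exI[of _ "\<not> s (Suc a)"] conjI allI impI)
      show "a = 1 \<or> s a = (\<not> s (Suc a))"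
      proof (cases "a = 1")
        case False
        moreover have "a \<noteq> n - 1" using ab2 ab by linarith
        ultimately show ?thesis using da by auto
      qed simp
      show "b = n \<or> s b = (\<not> s (Suc a))"
      proof (cases "b = n")
        case False
        moreover have "b - 1 \<noteq> 1" using ab2 ab by linarith
        moreover have "b - 1 \<noteq> n - 1" using False ab by linarith
        moreover have "Suc (b - 1) = b" using ab2 by simp
        moreover have "s (b - 1) = s (Suc a)" using const[of "b - 1"] ab2 by simp
        ultimately show ?thesis using db by auto
      qed simp
      fix c assume "a < c \<and> c < b"
      then show "s c \<noteq> (\<not> s (Suc a))" using const[of c] by auto
    qed
  qed
qed

locale comb =
  fixes n :: nat and d e f :: "nat \<Rightarrow> bool"
  assumes n3: "3 \<le> n"
  and s1: "d 1" "e 1" "f 1" and s2: "d (n-1)" "e (n-1)" "f (n-1)"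
  and H: "\<And>a b. 1 \<le> a \<Longrightarrow> a < b \<Longrightarrow> b \<le> n \<Longrightarrow> Dcond n f a b \<Longrightarrow> Dcond n d a b \<or> Dcond n e a b"
begin

lemma swap: "comb n e d f"
  using n3 s1 s2 H by unfold_locales blast+

lemma pointwise:
  assumes "2 \<le> k" "k \<le> n - 2"
  shows "f k = d k \<or> f k = e k"
proof (rule ccontr)
  assume c: "\<not> (f k = d k \<or> f k = e k)"
  show False
  proof (cases "f k")
    case False
    then have "d k" "e k" using c by auto
    have "Dcond n f k (Suc k)" using False assms n3 unfolding Dcond_def by auto
    moreover have "\<not> Dcond n d k (Suc k)" "\<not> Dcond n e k (Suc k)"
      using \<open>d k\<close> \<open>e k\<close> assms n3 unfolding Dcond_def by auto
    moreover have "Suc k \<le> n" using assms n3 by linarith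
    ultimately show False using H[of k "Suc k"] assms by auto
  next
    case True
    then have "\<not> d k" "\<not> e k" using c by auto
    obtain p where p: "1 \<le> p" "p < k" "f p" "\<forall>j. p < j \<and> j < k \<longrightarrow> \<not> f j"
      using prev_one[of f k] s1 assms by auto
    have "Dcond n f p (Suc k)" using p True unfolding Dcond_def by auto
    moreover have "\<not> Dcond n d p (Suc k)" "\<not> Dcond n e p (Suc k)"
      using \<open>\<not> d k\<close> \<open>\<not> e k\<close> p unfolding Dcond_def by auto
    moreover have "Suc k \<le> n" using assms n3 by linarith
    ultimately show False using H[of p "Suc k"] assms p by auto
  qed
qed

lemma no_switch:
  "i < j \<Longrightarrow> 2 \<le> i \<Longrightarrow> j \<le> n - 2 \<Longrightarrow> f i \<noteq> d i \<Longrightarrow> f j \<noteq> e j \<Longrightarrow>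
   (\<forall>c. i < c \<and> c < j \<longrightarrow> \<not> (d c \<and> e c)) \<Longrightarrow> False"
proof (induction "j - i" arbitrary: i j rule: less_induct)
  case less
  show False
  proof (cases "\<exists>c. i < c \<and> c < j \<and> d c \<noteq> e c")
    case True
    then obtain c where c: "i < c" "c < j" "d c \<noteq> e c" by auto
    have c2: "2 \<le> c" "c \<le> n - 2" using c less.prems(2,3) by linarith+
    have "f c = d c \<or> f c = e c" by (rule pointwise[OF c2])
    then show False
    proof
      assume fc: "f c = d c"
      have m: "c - i < j - i" using c by linarith
      have a6: "\<forall>c'. i < c' \<and> c' < c \<longrightarrow> \<not> (d c' \<and> e c')" using less.prems(6) c by auto
      have "f c \<noteq> e c" using fc c by simp
      show False by (rule less.hyps[OF m c(1) less.prems(2) c2(2) less.prems(4) \<open>f c \<noteq> e c\<close> a6])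
    next
      assume fc: "f c = e c"
      have m: "j - c < j - i" using c by linarith
      have a6: "\<forall>c'. c < c' \<and> c' < j \<longrightarrow> \<not> (d c' \<and> e c')" using less.prems(6) c by auto
      have "f c \<noteq> d c" using fc c by simp
      show False by (rule less.hyps[OF m c(2) c2(1) less.prems(3) \<open>f c \<noteq> d c\<close> less.prems(5) a6])
    qed
  next
    case False
    then have z: "\<And>c. i < c \<Longrightarrow> c < j \<Longrightarrow> \<not> d c \<and> \<not> e c \<and> \<not> f c"
    proof -
      fix c assume "i < c" "c < j"
      then have "d c = e c" "\<not> (d c \<and> e c)" using False less.prems by auto
      moreover have "f c = d c \<or> f c = e c" using pointwise[of c] \<open>i < c\<close> \<open>c < j\<close> less.prems by linarith
      ultimately show "\<not> d c \<and> \<not> e c \<and> \<not> f c" by auto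
    qed
    have fi: "f i = e i" using pointwise[of i] less.prems by auto
    have fj: "f j = d j" using pointwise[of j] less.prems by auto
    have jn: "Suc j \<le> n" "j < n - 1" using less.prems n3 by linarith+
    show False
    proof (cases "f i")
      case True
      note fiT = True
      show False
      proof (cases "f j")
        case True
        have "Dcond n f i (Suc j)" using fiT True z less.prems unfolding Dcond_def by auto
        moreover have "\<not> Dcond n d i (Suc j)" "\<not> Dcond n e i (Suc j)"
          using fiT True less.prems unfolding Dcond_def by auto
        ultimately show False using H[of i "Suc j"] less.prems jn by auto
      next
        case False
        obtain q where q: "j < q" "q \<le> n - 1" "f q" "\<forall>k. j < k \<and> k < q \<longrightarrow> \<not> f k"
          using next_one[of f "n-1" j] s2 jn by auto
        have zz: "\<forall>k. i < k \<and> k < q \<longrightarrow> \<not> f k"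
        proof (intro allI impI)
          fix k assume k: "i < k \<and> k < q"
          show "\<not> f k"
          proof (cases "k < j")
            case True then show ?thesis using z k by auto
          next
            case False then show ?thesis using q k \<open>\<not> f j\<close> by (cases "k = j") auto
          qed
        qed
        have "Dcond n f i (Suc q)" using fiT q zz less.prems unfolding Dcond_def by auto
        moreover have "\<not> Dcond n d i (Suc q)" using fiT less.prems q unfolding Dcond_def by auto
        moreover have "\<not> Dcond n e i (Suc q)" using False fj less.prems q
          unfolding Dcond_def by auto
        moreover have "Suc q \<le> n" using q n3 by linarith
        ultimately show False using H[of i "Suc q"] less.prems q by auto
      qed
    next
      case False
      note fiF = False
      obtain p where p: "1 \<le> p" "p < i" "f p" "\<forall>k. p < k \<and> k < i \<longrightarrow> \<not> f k"
        using prev_one[of f i] s1 less.prems by auto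
      show False
      proof (cases "f j")
        case True
        have zz: "\<forall>k. p < k \<and> k < j \<longrightarrow> \<not> f k"
        proof (intro allI impI)
          fix k assume k: "p < k \<and> k < j"
          show "\<not> f k"
          proof (cases "k < i")
            case True then show ?thesis using p k by auto
          next
            case False then show ?thesis using z k fiF by (cases "k = i") auto
          qed
        qed
        have "Dcond n f p (Suc j)" using True p zz less.prems unfolding Dcond_def by auto
        moreover have "\<not> Dcond n d p (Suc j)" using fiF fi less.prems p unfolding Dcond_def by auto
        moreover have "\<not> Dcond n e p (Suc j)" using True less.prems p unfolding Dcond_def by auto
        ultimately show False using H[of p "Suc j"] less.prems p jn by auto
      next
        case False
        obtain q where q: "j < q" "q \<le> n - 1" "f q" "\<forall>k. j < k \<and> k < q \<longrightarrow> \<not> f k"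
          using next_one[of f "n-1" j] s2 jn by auto
        have zz: "\<forall>k. p < k \<and> k < q \<longrightarrow> \<not> f k"
        proof (intro allI impI)
          fix k assume k: "p < k \<and> k < q"
          show "\<not> f k"
          proof -
            consider "k < i" | "k = i" | "i < k \<and> k < j" | "k = j" | "j < k" by linarith
            then show ?thesis using p q z k fiF False by cases auto
          qed
        qed
        have "Dcond n f p (Suc q)" using q p zz less.prems unfolding Dcond_def by auto
        moreover have "\<not> Dcond n d p (Suc q)" using fiF fi less.prems p q unfolding Dcond_def by auto
        moreover have "\<not> Dcond n e p (Suc q)" using False fj less.prems p q unfolding Dcond_def by auto
        moreover have "Suc q \<le> n" using q n3 by linarith
        ultimately show False using H[of p "Suc q"] p q less.prems by auto
      qed
    qed
  qed
qed


lemma agree: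
  assumes ab: "1 \<le> a" "Suc (Suc a) \<le> b" "b \<le> n"
  and nc: "\<forall>c. a < c \<and> c < b - 1 \<longrightarrow> \<not> (d c \<and> e c)"
  shows "(\<forall>k. a \<le> k \<and> k \<le> b - 1 \<longrightarrow> f k = d k) \<or> (\<forall>k. a \<le> k \<and> k \<le> b - 1 \<longrightarrow> f k = e k)"
proof (rule ccontr)
  assume "\<not> ?thesis"
  then obtain i j where i: "a \<le> i" "i \<le> b - 1" "f i \<noteq> d i" and j: "a \<le> j" "j \<le> b - 1" "f j \<noteq> e j"
    by auto
  have i2: "2 \<le> i" "i \<le> n - 2"
  proof -
    have "i \<noteq> 1" using i s1 by auto
    moreover have "i \<noteq> n - 1" using i s2 by auto
    ultimately show "2 \<le> i" "i \<le> n - 2" using i ab by linarith+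
  qed
  have j2: "2 \<le> j" "j \<le> n - 2"
  proof -
    have "j \<noteq> 1" using j s1 by auto
    moreover have "j \<noteq> n - 1" using j s2 by auto
    ultimately show "2 \<le> j" "j \<le> n - 2" using j ab by linarith+
  qed
  have "i \<noteq> j" using pointwise[OF i2] i j by auto
  then consider "i < j" | "j < i" by linarith
  then show False
  proof cases
    case 1
    have "\<forall>c. i < c \<and> c < j \<longrightarrow> \<not> (d c \<and> e c)" using nc i j by auto
    then show False using no_switch[OF 1 i2(1) j2(2) i(3) j(3)] by blast
  next
    case 2
    have "\<forall>c. j < c \<and> c < i \<longrightarrow> \<not> (e c \<and> d c)" using nc i j by auto
    then show False using comb.no_switch[OF swap 2 j2(1) i2(2) j(3) i(3)] by blast
  qed
qed

lemma count:
  assumes g: "\<And>k. 1 \<le> k \<Longrightarrow> k \<le> n - 1 \<Longrightarrow> g k = (d k \<noteq> (e k \<noteq> f k))"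
  and ab: "1 \<le> a" "a < b" "b \<le> n"
  shows "(if Dcond n d a b then 1 else 0) + (if Dcond n e a b then 1 else 0) =
         (if Dcond n f a b then 1 else 0) + (if Dcond n g a b then 1 else (0::real))"
proof (cases "b = Suc a")
  case True
  show ?thesis
  proof (cases "a = 1 \<or> a = n - 1")
    case True
    then show ?thesis using \<open>b = Suc a\<close> by (auto simp: Dcond_short)
  next
    case False
    then have a2: "2 \<le> a" "a \<le> n - 2" using ab True by linarith+
    have "g a = (d a \<noteq> (e a \<noteq> f a))" using g a2 by auto
    moreover have "f a = d a \<or> f a = e a" by (rule pointwise[OF a2])
    ultimately show ?thesis using \<open>b = Suc a\<close> False by (auto simp: Dcond_short)
  qed
next
  case False
  then have ab2: "Suc (Suc a) \<le> b" using ab by linarith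
  show ?thesis
  proof (cases "\<exists>c. a < c \<and> c < b - 1 \<and> d c \<and> e c")
    case True
    then obtain c where c: "a < c" "c < b - 1" "d c" "e c" by auto
    have c2: "2 \<le> c" "c \<le> n - 2" using c ab by linarith+
    have "f c" using pointwise[OF c2] c by auto
    moreover have "g c" using g[of c] c2 c \<open>f c\<close> by auto
    ultimately show ?thesis using c ab2 by (auto simp: Dcond_long)
  next
    case False
    then have nc: "\<forall>c. a < c \<and> c < b - 1 \<longrightarrow> \<not> (d c \<and> e c)" by auto
    have gk: "\<And>k. a \<le> k \<Longrightarrow> k \<le> b - 1 \<Longrightarrow> g k = (d k \<noteq> (e k \<noteq> f k))"
      using g ab by auto
    from agree[OF ab(1) ab2 ab(3) nc] show ?thesis
    proof
      assume fd: "\<forall>k. a \<le> k \<and> k \<le> b - 1 \<longrightarrow> f k = d k"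
      have "Dcond n f a b = Dcond n d a b" by (rule Dcond_cong[OF ab2]) (use fd in auto)
      moreover have "Dcond n g a b = Dcond n e a b" by (rule Dcond_cong[OF ab2]) (use fd gk in auto)
      ultimately show ?thesis by simp
    next
      assume fe: "\<forall>k. a \<le> k \<and> k \<le> b - 1 \<longrightarrow> f k = e k"
      have "Dcond n f a b = Dcond n e a b" by (rule Dcond_cong[OF ab2]) (use fe in auto)
      moreover have "Dcond n g a b = Dcond n d a b" by (rule Dcond_cong[OF ab2]) (use fe gk in auto)
      ultimately show ?thesis by simp
    qed
  qed
qed

end



fun pe :: "nat list \<Rightarrow> nat set set" where
  "pe (a # b # xs) = insert {a, b} (pe (b # xs))"
| "pe _ = {}"

lemma pe_nth: "pe xs = (\<lambda>i. {xs ! i, xs ! Suc i}) ` {i. Suc i < length xs}"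
proof (induction xs rule: pe.induct)
  case (1 a b xs)
  have "{i. Suc i < length (a # b # xs)} = insert 0 (Suc ` {i. Suc i < length (b # xs)})"
    by (auto simp: image_iff) (metis Suc_less_SucD less_Suc_eq_0_disj)
  then show ?case using 1 by (simp add: image_image)
qed auto

lemma tour_edges_pe:
  assumes "xs \<noteq> []"
  shows "tour_edges xs = pe (xs @ [hd xs])"
proof -
  have "tour_edges xs = (\<lambda>i. {xs ! i, xs ! ((i + 1) mod length xs)}) ` {i. i < length xs}"
    unfolding tour_edges_def by auto
  also have "\<dots> = (\<lambda>i. {(xs @ [hd xs]) ! i, (xs @ [hd xs]) ! Suc i}) ` {i. Suc i < length (xs @ [hd xs])}"
  proof (rule image_cong)
    show "{i. i < length xs} = {i. Suc i < length (xs @ [hd xs])}" by auto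
  next
    fix i assume "i \<in> {i. Suc i < length (xs @ [hd xs])}"
    then have i: "i < length xs" by auto
    show "{xs ! i, xs ! ((i + 1) mod length xs)} = {(xs @ [hd xs]) ! i, (xs @ [hd xs]) ! Suc i}"
    proof (cases "Suc i < length xs")
      case True
      then show ?thesis using i by (simp add: nth_append)
    next
      case False
      then have "Suc i = length xs" using i by simp
      then show ?thesis using i assms by (simp add: nth_append hd_conv_nth)
    qed
  qed
  finally show ?thesis by (simp add: pe_nth)
qed

lemma pe_append: "pe (xs @ m # ys) = pe (xs @ [m]) \<union> pe (m # ys)"
  by (induction xs rule: pe.induct) auto

lemma pe_rev: "pe (rev xs) = pe xs"
proof (induction xs rule: pe.induct)
  case (1 a b xs)
  have "pe (rev (a # b # xs)) = pe (rev xs @ b # [a])" by simp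
  also have "\<dots> = pe (rev (b # xs)) \<union> {{a, b}}" using pe_append[of "rev xs" b "[a]"]
    by (simp add: insert_commute)
  finally show ?case using 1 by auto
qed auto

definition consec :: "nat set \<Rightarrow> nat \<Rightarrow> nat \<Rightarrow> bool" where
  "consec S a b \<longleftrightarrow> a \<in> S \<and> b \<in> S \<and> a < b \<and> (\<forall>c\<in>S. \<not> (a < c \<and> c < b))"

lemma pe_sorted: "sorted_wrt (<) xs \<Longrightarrow> pe xs = {{a, b} | a b. consec (set xs) a b}"
proof (induction xs rule: pe.induct)
  case (1 a b xs)
  let ?S = "set (b # xs)"
  have lt: "\<forall>x\<in>?S. a < x" using 1(2) by auto
  have bl: "\<forall>x\<in>?S. b \<le> x" using 1(2) by (auto simp: order_less_imp_le)
  have key: "consec (insert a ?S) x y \<longleftrightarrow> (x = a \<and> y = b) \<or> consec ?S x y" for x y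
  proof
    assume c: "consec (insert a ?S) x y"
    show "(x = a \<and> y = b) \<or> consec ?S x y"
    proof (cases "x = a")
      case True
      then have "y \<in> ?S" using c unfolding consec_def by auto
      have "y = b"
      proof (rule ccontr)
        assume "y \<noteq> b"
        then have "b < y" using bl \<open>y \<in> ?S\<close> by force
        moreover have "a < b" using lt by auto
        ultimately show False using c True unfolding consec_def by auto
      qed
      then show ?thesis using True by simp
    next
      case False
      then have "x \<in> ?S" using c unfolding consec_def by auto
      then have "y \<in> ?S" using c lt unfolding consec_def by force
      then show ?thesis using c \<open>x \<in> ?S\<close> unfolding consec_def by auto
    qed
  next
    assume "(x = a \<and> y = b) \<or> consec ?S x y"
    then show "consec (insert a ?S) x y"
    proof
      assume "x = a \<and> y = b"
      then show ?thesis using lt bl unfolding consec_def by force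
    next
      assume "consec ?S x y"
      then show ?thesis using lt unfolding consec_def by force
    qed
  qed
  have "pe (a # b # xs) = insert {a, b} {{x, y} | x y. consec ?S x y}"
    using 1 by simp
  also have "\<dots> = {{x, y} | x y. consec (insert a ?S) x y}"
    unfolding key by blast
  finally show ?case by simp
next
  case ("2_1") then show ?case by (simp add: consec_def)
next
  case ("2_2" v) then show ?case by (auto simp: consec_def)
qed

definition seqU :: "nat \<Rightarrow> nat set \<Rightarrow> nat list" where
  "seqU n U = 1 # sorted_list_of_set U @ n # rev (sorted_list_of_set ({2..<n} - U))"

lemma slist_ins:
  fixes U :: "nat set"
  assumes "U \<subseteq> {2..<n}" "2 \<le> n"
  shows "sorted_list_of_set (insert 1 (insert n U)) = 1 # sorted_list_of_set U @ [n]"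
proof -
  have fin: "finite U" using assms finite_subset by blast
  show ?thesis
  proof (rule strict_sorted_equal)
    have s1: "sorted_wrt (<) (sorted_list_of_set U)" by simp
    have s2: "set (sorted_list_of_set U) = U" using fin by simp
    show "sorted_wrt (<) (1 # sorted_list_of_set U @ [n])"
      unfolding sorted_wrt.simps(2) sorted_wrt_append using s1 assms by (auto simp: s2)
    show "sorted_wrt (<) (sorted_list_of_set (insert 1 (insert n U)))"
      by (rule strict_sorted_list_of_set)
    have "set (sorted_list_of_set (insert 1 (insert n U))) = insert 1 (insert n U)"
      by (rule set_sorted_list_of_set) (use fin in blast)
    then show "set (sorted_list_of_set (insert 1 (insert n U))) = set (1 # sorted_list_of_set U @ [n])"
      using s2 by auto
  qed
qed

lemma seqU_edges:
  assumes "U \<subseteq> {2..<n}" "2 \<le> n"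
  shows "tour_edges (seqU n U) =
    {{a, b} | a b. consec (insert 1 (insert n U)) a b} \<union>
    {{a, b} | a b. consec (insert 1 (insert n ({2..<n} - U))) a b}"
proof -
  let ?A = "sorted_list_of_set U" and ?B = "sorted_list_of_set ({2..<n} - U)"
  have "tour_edges (seqU n U) = pe (seqU n U @ [1])"
    by (simp add: tour_edges_pe seqU_def)
  also have "seqU n U @ [1] = (1 # ?A) @ n # (rev ?B @ [1])" by (simp add: seqU_def)
  also have "pe \<dots> = pe (1 # ?A @ [n]) \<union> pe (n # rev ?B @ [1])"
    using pe_append[of "1 # ?A" n "rev ?B @ [1]"] by simp
  also have "pe (n # rev ?B @ [1]) = pe (1 # ?B @ [n])"
    using pe_rev[of "1 # ?B @ [n]"] by simp
  also have "1 # ?A @ [n] = sorted_list_of_set (insert 1 (insert n U))"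
    using slist_ins[OF assms] by simp
  also have "1 # ?B @ [n] = sorted_list_of_set (insert 1 (insert n ({2..<n} - U)))"
    using slist_ins[of "{2..<n} - U" n] assms(2) by auto
  finally have T: "tour_edges (seqU n U) = pe (sorted_list_of_set (insert 1 (insert n U))) \<union>
      pe (sorted_list_of_set (insert 1 (insert n ({2..<n} - U))))" .
  have pX: "pe (sorted_list_of_set X) = {{a, b} | a b. consec X a b}" if "finite X" for X
    using pe_sorted[of "sorted_list_of_set X"] that by simp
  have f1: "finite (insert 1 (insert n U))" using assms finite_subset by auto
  have f2: "finite (insert 1 (insert n ({2..<n} - U)))" by auto
  show ?thesis unfolding T pX[OF f1] pX[OF f2] ..
qed

lemma consec_label:
  assumes "S \<subseteq> {2..<n}" "2 \<le> n"
  shows "consec (insert 1 (insert n S)) a b \<longleftrightarrow>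
    1 \<le> a \<and> a < b \<and> b \<le> n \<and> (a = 1 \<or> a \<in> S) \<and> (b = n \<or> b \<in> S) \<and> (\<forall>c. a < c \<and> c < b \<longrightarrow> c \<notin> S)"
  using assms unfolding consec_def by (auto; force)

definition dU :: "nat \<Rightarrow> nat set \<Rightarrow> nat \<Rightarrow> bool" where
  "dU n U = (\<lambda>k. k = 1 \<or> k = n - 1 \<or> (k \<in> U) \<noteq> (Suc k \<in> U))"

lemma edge_iff:
  assumes "U \<subseteq> {2..<n}" "3 \<le> n"
  shows "\<epsilon> \<in> tour_edges (seqU n U) \<longleftrightarrow>
     (\<exists>a b. \<epsilon> = {a, b} \<and> 1 \<le> a \<and> a < b \<and> b \<le> n \<and> Dcond n (dU n U) a b)"
proof -
  have D: "{2..<n} - U \<subseteq> {2..<n}" by auto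
  have n2: "2 \<le> n" using assms by linarith
  have "(consec (insert 1 (insert n U)) a b \<or> consec (insert 1 (insert n ({2..<n} - U))) a b) \<longleftrightarrow>
        (1 \<le> a \<and> a < b \<and> b \<le> n \<and> Dcond n (dU n U) a b)" for a b
  proof -
    have "(consec (insert 1 (insert n U)) a b \<or> consec (insert 1 (insert n ({2..<n} - U))) a b) \<longleftrightarrow>
          (1 \<le> a \<and> a < b \<and> b \<le> n \<and> (\<exists>\<sigma>. (a = 1 \<or> (a \<in> U) = \<sigma>) \<and> (b = n \<or> (b \<in> U) = \<sigma>) \<and>
             (\<forall>c. a < c \<and> c < b \<longrightarrow> (c \<in> U) \<noteq> \<sigma>)))"
      (is "?L \<longleftrightarrow> ?R")
    proof
      assume ?L
      then show ?R
      proof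
        assume c: "consec (insert 1 (insert n U)) a b"
        have c': "1 \<le> a \<and> a < b \<and> b \<le> n \<and> (a = 1 \<or> a \<in> U) \<and> (b = n \<or> b \<in> U) \<and> (\<forall>c. a < c \<and> c < b \<longrightarrow> c \<notin> U)"
          using c consec_label[OF assms(1) n2] assms by auto
        show ?R using c' by (intro conjI exI[of _ True]) auto
      next
        assume c: "consec (insert 1 (insert n ({2..<n} - U))) a b"
        have c': "1 \<le> a \<and> a < b \<and> b \<le> n \<and> (a = 1 \<or> a \<in> {2..<n} - U) \<and> (b = n \<or> b \<in> {2..<n} - U) \<and> (\<forall>c. a < c \<and> c < b \<longrightarrow> c \<notin> {2..<n} - U)"
          using c consec_label[OF D n2] assms by auto
        show ?R using c' assms by (intro conjI exI[of _ False]) auto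
      qed
    next
      assume r: ?R
      then obtain \<sigma> where s: "(a = 1 \<or> (a \<in> U) = \<sigma>)" "(b = n \<or> (b \<in> U) = \<sigma>)"
             "(\<forall>c. a < c \<and> c < b \<longrightarrow> (c \<in> U) \<noteq> \<sigma>)" by blast
      show ?L
      proof (cases \<sigma>)
        case True
        have "consec (insert 1 (insert n U)) a b"
          unfolding consec_label[OF assms(1) n2] using r s assms True by auto
        then show ?L by simp
      next
        case False
        have "consec (insert 1 (insert n ({2..<n} - U))) a b"
          unfolding consec_label[OF D n2] using r s assms False by auto
        then show ?L by simp
      qed
    qed
    also have "\<dots> \<longleftrightarrow> (1 \<le> a \<and> a < b \<and> b \<le> n \<and> Dcond n (dU n U) a b)"
      unfolding dU_def
      apply (rule conj_cong[OF refl])+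
      apply (rule label_Dcond[of a b n "\<lambda>c. c \<in> U"])
      using assms by auto
    finally show ?thesis .
  qed
  note pair = this
  have e1: "\<epsilon> \<in> tour_edges (seqU n U) \<longleftrightarrow> (\<exists>a b. \<epsilon> = {a, b} \<and>
      (consec (insert 1 (insert n U)) a b \<or> consec (insert 1 (insert n ({2..<n} - U))) a b))"
    unfolding seqU_edges[OF assms(1) n2] Un_iff mem_Collect_eq conj_disj_distribL ex_disj_distrib
    by (rule refl)
  show ?thesis unfolding e1 pair conj_assoc by (rule refl)
qed

lemma seqU_pyr:
  fixes U :: "nat set"
  assumes U: "U \<subseteq> {2..<n}" and n2: "2 \<le> n"
  shows "pyramidal_seq n (seqU n U)"
proof -
  let ?A = "sorted_list_of_set U" and ?D = "{2..<n} - U"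
  let ?B = "sorted_list_of_set ?D"
  have fin: "finite U" using U finite_subset by blast
  have sA: "set ?A = U" using fin by simp
  have sB: "set ?B = ?D" by simp
  have cardU: "card U + card ?D = n - 2"
  proof -
    have "card ?D = card {2..<n} - card U" using U fin by (simp add: card_Diff_subset)
    moreover have "card U \<le> card {2..<n}" using U by (intro card_mono) auto
    ultimately show ?thesis by simp
  qed
  have lenA: "length ?A = card U" by simp
  have lenB: "length ?B = card ?D" by simp
  have len: "length (seqU n U) = n" unfolding seqU_def using cardU n2 by simp
  have dist: "distinct (seqU n U)" unfolding seqU_def using U sA sB n2 by auto
  have set: "set (seqU n U) = {1..n}" unfolding seqU_def using U sA sB n2 by auto
  have r1: "card U + 1 < n" using cardU n2 by linarith
  have nth: "seqU n U ! (card U + 1) = n" unfolding seqU_def using lenA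
    by (simp add: nth_append)
  have tk: "take (card U) (drop 1 (seqU n U)) = ?A" unfolding seqU_def using lenA by simp
  have dr: "drop (card U + 2) (seqU n U) = rev ?B" unfolding seqU_def using lenA by simp
  have sr: "sorted_wrt (>) (rev ?B)" by (simp add: sorted_wrt_rev)
  show ?thesis unfolding pyramidal_seq_def
    using len dist set r1 nth tk dr sr by (intro conjI exI[of _ "card U"]) (auto simp: seqU_def)
qed

lemma pyr_seqU:
  assumes p: "pyramidal_seq n t" and n2: "2 \<le> n"
  shows "\<exists>U \<subseteq> {2..<n}. t = seqU n U"
proof -
  obtain r where len: "length t = n" and dist: "distinct t" and st: "set t = {1..n}" and t0: "t ! 0 = 1"
    and r: "r + 1 < n" "t ! (r + 1) = n" "sorted_wrt (<) (take r (drop 1 t))"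
      "sorted_wrt (>) (drop (r + 2) t)"
    using p unfolding pyramidal_seq_def by blast
  let ?A = "take r (drop 1 t)" and ?R = "drop (r + 2) t"
  have tne: "t \<noteq> []" using len n2 by auto
  have "t = take 1 t @ drop 1 t" by simp
  also have "take 1 t = [1]" using tne t0 by (cases t) auto
  also have "drop 1 t = ?A @ drop r (drop 1 t)" by (rule append_take_drop_id[symmetric])
  also have "drop r (drop 1 t) = drop (Suc r) t" by simp
  also have "drop (Suc r) t = t ! Suc r # drop (Suc (Suc r)) t"
    using r(1) len by (simp add: Cons_nth_drop_Suc)
  finally have tdec: "t = 1 # ?A @ n # ?R" using r(2) by simp
  define U where "U = set ?A"
  have d2: "distinct (1 # ?A @ n # ?R)" using dist tdec by metis
  have s2: "set (1 # ?A @ n # ?R) = {1..n}" using st tdec by metis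
  have U: "U \<subseteq> {2..<n}"
  proof
    fix x assume "x \<in> U"
    then have "x \<in> {1..n}" "x \<noteq> 1" "x \<noteq> n" using s2 d2 unfolding U_def by auto
    then show "x \<in> {2..<n}" by auto
  qed
  have R: "set ?R = {2..<n} - U"
  proof
    show "set ?R \<subseteq> {2..<n} - U"
    proof
      fix x assume "x \<in> set ?R"
      then have "x \<in> {1..n}" "x \<noteq> 1" "x \<noteq> n" "x \<notin> U" using s2 d2 unfolding U_def by auto
      then show "x \<in> {2..<n} - U" by auto
    qed
    show "{2..<n} - U \<subseteq> set ?R"
    proof
      fix x assume x: "x \<in> {2..<n} - U"
      then have "x \<in> set (1 # ?A @ n # ?R)" using s2 by auto
      then show "x \<in> set ?R" using x unfolding U_def by auto
    qed
  qed
  have A: "?A = sorted_list_of_set U"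
    by (rule strict_sorted_equal[OF strict_sorted_list_of_set r(3)]) (simp add: U_def)
  have "rev ?R = sorted_list_of_set (set ?R)"
    by (rule strict_sorted_equal[OF strict_sorted_list_of_set]) (use r(4) in \<open>simp_all add: sorted_wrt_rev\<close>)
  then have B: "?R = rev (sorted_list_of_set ({2..<n} - U))" using R by (metis rev_rev_ident)
  have "t = seqU n U" unfolding seqU_def using tdec A B by metis
  then show ?thesis using U by blast
qed



lemma scaleR_fun_apply [simp]: "(c *\<^sub>R f) x = c *\<^sub>R f x"
  by (simp add: scaleR_fun_def)

lemma sum_fun_apply: "finite S \<Longrightarrow> (\<Sum>s\<in>S. g s) e = (\<Sum>s\<in>S. g s e)"
  by (induction S rule: finite_induct) auto

lemma PT_eq:
  assumes "3 \<le> n"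
  shows "PT n = (\<lambda>U. tour_edges (seqU n U)) ` {U. U \<subseteq> {2..<n}}"
proof -
  have n2: "2 \<le> n" using assms by linarith
  show ?thesis unfolding PT_def
  proof (intro set_eqI iffI)
    fix x assume "x \<in> {tour_edges t |t. pyramidal_seq n t}"
    then obtain t where "x = tour_edges t" "pyramidal_seq n t" by blast
    then show "x \<in> (\<lambda>U. tour_edges (seqU n U)) ` {U. U \<subseteq> {2..<n}}"
      using pyr_seqU[OF _ n2] by blast
  next
    fix x assume "x \<in> (\<lambda>U. tour_edges (seqU n U)) ` {U. U \<subseteq> {2..<n}}"
    then obtain U where "U \<subseteq> {2..<n}" "x = tour_edges (seqU n U)" by blast
    then show "x \<in> {tour_edges t |t. pyramidal_seq n t}" using seqU_pyr[OF _ n2] by blast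
  qed
qed

lemma doubleton_ord:
  fixes a b c d :: nat
  assumes "a < b" "c < d" "{a, b} = {c, d}"
  shows "a = c \<and> b = d"
  using assms by (auto simp: doubleton_eq_iff)

lemma edge_iff2:
  assumes "U \<subseteq> {2..<n}" "3 \<le> n" "1 \<le> a" "a < b" "b \<le> n"
  shows "{a, b} \<in> tour_edges (seqU n U) \<longleftrightarrow> Dcond n (dU n U) a b"
proof
  assume "{a, b} \<in> tour_edges (seqU n U)"
  then obtain a' b' where "{a, b} = {a', b'}" "a' < b'" "Dcond n (dU n U) a' b'"
    using edge_iff[OF assms(1,2)] by blast
  then show "Dcond n (dU n U) a b" using doubleton_ord[OF assms(4)] by metis
next
  assume "Dcond n (dU n U) a b"
  then show "{a, b} \<in> tour_edges (seqU n U)" using edge_iff[OF assms(1,2)] assms by blast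
qed

lemma edges_sub:
  assumes "3 \<le> n" "v \<in> PT n"
  shows "v \<subseteq> Pow {1..n}"
proof
  fix e assume e: "e \<in> v"
  obtain U where "U \<subseteq> {2..<n}" "v = tour_edges (seqU n U)" using assms PT_eq by auto
  then obtain a b where "e = {a, b}" "1 \<le> a" "a < b" "b \<le> n" using edge_iff e assms(1) by blast
  then show "e \<in> Pow {1..n}" by auto
qed

lemma exchange:
  assumes n3: "3 \<le> n" and U: "U \<subseteq> {2..<n}" and V: "V \<subseteq> {2..<n}" and W: "W \<subseteq> {2..<n}"
  and sub: "tour_edges (seqU n W) \<subseteq> tour_edges (seqU n U) \<union> tour_edges (seqU n V)"
  and G: "G = {c \<in> {2..<n}. (c \<in> U) \<noteq> ((c \<in> V) \<noteq> (c \<in> W))}"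
  shows "char_vec (tour_edges (seqU n U)) + char_vec (tour_edges (seqU n V)) =
         char_vec (tour_edges (seqU n W)) + char_vec (tour_edges (seqU n G))"
proof -
  have GS: "G \<subseteq> {2..<n}" using G by auto
  interpret comb n "dU n U" "dU n V" "dU n W"
  proof
    show "3 \<le> n" by fact
    show "dU n U 1" "dU n V 1" "dU n W 1" "dU n U (n - 1)" "dU n V (n - 1)" "dU n W (n - 1)"
      by (simp_all add: dU_def)
    fix a b assume ab: "1 \<le> a" "a < b" "b \<le> n" and "Dcond n (dU n W) a b"
    then have "{a, b} \<in> tour_edges (seqU n W)" using edge_iff2[OF W n3] by blast
    then have "{a, b} \<in> tour_edges (seqU n U) \<or> {a, b} \<in> tour_edges (seqU n V)" using sub by blast
    then show "Dcond n (dU n U) a b \<or> Dcond n (dU n V) a b"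
      using edge_iff2[OF U n3 ab] edge_iff2[OF V n3 ab] by blast
  qed
  have g: "dU n G k = (dU n U k \<noteq> (dU n V k \<noteq> dU n W k))" if "1 \<le> k" "k \<le> n - 1" for k
  proof (cases "k = 1 \<or> k = n - 1")
    case True then show ?thesis by (auto simp: dU_def)
  next
    case False
    then have k: "k \<in> {2..<n}" "Suc k \<in> {2..<n}" using that by auto
    then show ?thesis using False unfolding dU_def G by auto
  qed
  show ?thesis
  proof (rule ext)
    fix e
    show "(char_vec (tour_edges (seqU n U)) + char_vec (tour_edges (seqU n V))) e =
          (char_vec (tour_edges (seqU n W)) + char_vec (tour_edges (seqU n G))) e"
    proof (cases "\<exists>a b. e = {a, b} \<and> 1 \<le> a \<and> a < b \<and> b \<le> n")
      case True
      then obtain a b where ab: "e = {a, b}" "1 \<le> a" "a < b" "b \<le> n" by blast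
      show ?thesis
        unfolding plus_fun_apply char_vec_def ab(1)
          edge_iff2[OF U n3 ab(2-4)] edge_iff2[OF V n3 ab(2-4)]
          edge_iff2[OF W n3 ab(2-4)] edge_iff2[OF GS n3 ab(2-4)]
        by (rule count[OF g ab(2-4)])
    next
      case False
      then have "e \<notin> tour_edges (seqU n X)" if "X \<subseteq> {2..<n}" for X
        using edge_iff[OF that n3] by blast
      then show ?thesis using U V W GS by (simp add: char_vec_def)
    qed
  qed
qed

lemma char_vec_inj: "char_vec x = char_vec y \<Longrightarrow> x = y"
  unfolding char_vec_def by (metis (mono_tags, lifting) subsetI subset_antisym zero_neq_one)

lemma seg_01:
  assumes "x \<noteq> y" "char_vec z \<in> closed_segment (char_vec x) (char_vec y)"
  shows "z = x \<or> z = y"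
proof -
  obtain u where u: "0 \<le> u" "u \<le> 1" "char_vec z = (1 - u) *\<^sub>R char_vec x + u *\<^sub>R char_vec y"
    using assms(2) unfolding in_segment by blast
  show ?thesis
  proof (cases "u = 0 \<or> u = 1")
    case True
    then have "char_vec z = char_vec x \<or> char_vec z = char_vec y" using u(3) by auto
    then show ?thesis using char_vec_inj by blast
  next
    case False
    then have u01: "0 < u" "u < 1" using u by auto
    obtain e where e: "(e \<in> x) \<noteq> (e \<in> y)" using assms(1) by blast
    have "char_vec z e = (1 - u) * char_vec x e + u * char_vec y e"
      using u(3) by (metis plus_fun_apply scaleR_fun_apply real_scaleR_def)
    moreover have "char_vec z e = 0 \<or> char_vec z e = 1" by (simp add: char_vec_def)
    ultimately show ?thesis using e u01 by (auto simp: char_vec_def split: if_splits)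
  qed
qed

lemma sum_two: "a \<noteq> b \<Longrightarrow> (\<Sum>s\<in>{a, b}. g s) = g a + g b"
  by simp

lemma f_lin:
  fixes Q :: "nat set set"
  assumes "finite S" "finite Q"
  shows "(\<Sum>e\<in>Q. (\<Sum>s\<in>S. c s *\<^sub>R s) e) = (\<Sum>s\<in>S. c s * (\<Sum>e\<in>Q. s e))"
proof -
  have "(\<Sum>e\<in>Q. (\<Sum>s\<in>S. c s *\<^sub>R s) e) = (\<Sum>e\<in>Q. \<Sum>s\<in>S. c s * s e)"
    using assms(1) by (simp add: sum_fun_apply)
  also have "\<dots> = (\<Sum>s\<in>S. \<Sum>e\<in>Q. c s * s e)" by (rule sum.swap)
  also have "\<dots> = (\<Sum>s\<in>S. c s * (\<Sum>e\<in>Q. s e))" by (simp add: sum_distrib_left)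
  finally show ?thesis .
qed

lemma f_seg:
  fixes Q :: "nat set set"
  shows "(\<Sum>e\<in>Q. ((1 - u) *\<^sub>R a + u *\<^sub>R b) e) = (1 - u) * (\<Sum>e\<in>Q. a e) + u * (\<Sum>e\<in>Q. b e)"
  by (simp add: sum.distrib sum_distrib_left)

lemma face_if_no_z:
  assumes n3: "3 \<le> n" and x: "x \<in> PT n" and y: "y \<in> PT n" and xy: "x \<noteq> y"
  and noz: "\<And>z. z \<in> PT n \<Longrightarrow> z \<subseteq> x \<union> y \<Longrightarrow> z = x \<or> z = y"
  shows "closed_segment (char_vec x) (char_vec y) face_of PYR n"
proof -
  define S where "S = char_vec ` PT n"
  define Q where "Q = Pow {1..n} - (x \<union> y)"
  define f where "f = (\<lambda>p::nat set \<Rightarrow> real. \<Sum>e\<in>Q. p e)"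
  define X where "X = char_vec x"
  define Y where "Y = char_vec y"
  define T where "T = closed_segment X Y"
  have finPT: "finite (PT n)" unfolding PT_eq[OF n3]
  proof (rule finite_imageI)
    show "finite {U. U \<subseteq> {2..<n}}" by (simp add: finite_Collect_subsets)
  qed
  have finS: "finite S" unfolding S_def using finPT by simp
  have finQ: "finite Q" unfolding Q_def by simp
  have XY: "X \<noteq> Y" unfolding X_def Y_def using xy char_vec_inj by blast
  have XS: "X \<in> S" "Y \<in> S" unfolding S_def X_def Y_def using x y by auto
  have fs0: "f s \<ge> 0" if "s \<in> S" for s
    using that unfolding f_def S_def char_vec_def by (auto intro: sum_nonneg)
  have fsXY: "s = X \<or> s = Y" if sS: "s \<in> S" and s0: "f s = 0" for s
  proof -
    obtain v where v: "v \<in> PT n" "s = char_vec v" using sS unfolding S_def by blast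
    have "\<forall>e\<in>Q. char_vec v e = 0"
      using s0 v fs0[OF sS] finQ unfolding f_def
      by (subst sum_nonneg_eq_0_iff[symmetric]) (auto simp: char_vec_def)
    then have "\<forall>e\<in>Q. e \<notin> v" by (auto simp: char_vec_def split: if_splits)
    moreover have "v \<subseteq> Pow {1..n}" by (rule edges_sub[OF n3 v(1)])
    ultimately have "v \<subseteq> x \<union> y" unfolding Q_def by blast
    then have "v = x \<or> v = y" using noz v(1) by blast
    then show ?thesis using v unfolding X_def Y_def by blast
  qed
  have fX: "f X = 0" "f Y = 0" unfolding f_def X_def Y_def Q_def char_vec_def by auto
  have K1: "f p \<ge> 0 \<and> (f p = 0 \<longrightarrow> p \<in> T)" if pP: "p \<in> PYR n" for p
  proof -
    obtain c where c: "\<forall>s\<in>S. 0 \<le> c s" "sum c S = 1" "(\<Sum>s\<in>S. c s *\<^sub>R s) = p"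
      using pP unfolding PYR_def S_def[symmetric] convex_hull_finite[OF finS] by blast
    have fp: "f p = (\<Sum>s\<in>S. c s * f s)"
      unfolding f_def c(3)[symmetric] using f_lin[OF finS finQ] by simp
    have nn: "\<And>s. s \<in> S \<Longrightarrow> 0 \<le> c s * f s" using c(1) fs0 by simp
    have "f p \<ge> 0" unfolding fp by (rule sum_nonneg) (use nn in auto)
    moreover have "p \<in> T" if fp0: "f p = 0"
    proof -
      have s0: "(\<Sum>s\<in>S. c s * f s) = 0" using fp0 fp by simp
      have z: "\<forall>s\<in>S. c s * f s = 0" using sum_nonneg_eq_0_iff[OF finS nn] s0 by simp
      have cz: "c s = 0" if "s \<in> S - {X, Y}" for s
      proof -
        have "f s \<noteq> 0" using fsXY that by blast
        then show ?thesis using z that by (metis DiffD1 mult_eq_0_iff)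
      qed
      have sub: "{X, Y} \<subseteq> S" using XS by auto
      have "sum c S = sum c {X, Y} + sum c (S - {X, Y})"
        using sum.subset_diff[OF sub finS, of c] by (simp add: add.commute)
      also have "sum c (S - {X, Y}) = 0" using cz by simp
      finally have c1: "c X + c Y = 1" using c(2) XY by simp
      have "(\<Sum>s\<in>S. c s *\<^sub>R s) = (\<Sum>s\<in>{X, Y}. c s *\<^sub>R s) + (\<Sum>s\<in>S - {X, Y}. c s *\<^sub>R s)"
        using sum.subset_diff[OF sub finS, of "\<lambda>s. c s *\<^sub>R s"] by (simp add: add.commute)
      also have "(\<Sum>s\<in>S - {X, Y}. c s *\<^sub>R s) = 0" using cz by simp
      finally have "(\<Sum>s\<in>S. c s *\<^sub>R s) = (\<Sum>s\<in>{X, Y}. c s *\<^sub>R s)" by (simp only: add_0_right)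
      then have "p = c X *\<^sub>R X + c Y *\<^sub>R Y" using c(3) sum_two[OF XY, of "\<lambda>s. c s *\<^sub>R s"] by (simp only:)
      moreover have "1 - c Y = c X" using c1 by simp
      ultimately have "p = (1 - c Y) *\<^sub>R X + c Y *\<^sub>R Y" by (simp only:)
      moreover have "0 \<le> c Y" "c Y \<le> 1" using c(1) XS c1 by force+
      ultimately show "p \<in> T" unfolding T_def in_segment by blast
    qed
    ultimately show ?thesis by blast
  qed
  have K2: "f p = 0" if pT: "p \<in> T" for p
  proof -
    obtain u where "p = (1 - u) *\<^sub>R X + u *\<^sub>R Y" using pT unfolding T_def in_segment by blast
    then show ?thesis unfolding f_def using f_seg[where Q=Q and u=u and a=X and b=Y] fX unfolding f_def by simp
  qed
  have XP: "X \<in> PYR n" "Y \<in> PYR n" unfolding PYR_def X_def Y_def using x y by (auto intro!: hull_inc)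
  have TS: "T \<subseteq> PYR n" unfolding T_def
    by (rule closed_segment_subset[OF XP]) (simp add: PYR_def)
  show ?thesis unfolding T_def[symmetric, unfolded X_def Y_def] face_of_def
  proof (intro conjI)
    show "T \<subseteq> PYR n" by fact
    show "convex T" unfolding T_def by simp
    show "\<forall>a\<in>PYR n. \<forall>b\<in>PYR n. \<forall>p\<in>T. p \<in> open_segment a b \<longrightarrow> a \<in> T \<and> b \<in> T"
    proof (intro ballI impI)
    fix a b p assume a: "a \<in> PYR n" and b: "b \<in> PYR n" and p: "p \<in> T" and ps: "p \<in> open_segment a b"
    obtain u where u: "0 < u" "u < 1" "p = (1 - u) *\<^sub>R a + u *\<^sub>R b" using ps unfolding in_segment by blast
    have "0 = (1 - u) * f a + u * f b" using K2[OF p] u(3) f_seg[where Q=Q and u=u and a=a and b=b] unfolding f_def by simp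
    moreover have "f a \<ge> 0" "f b \<ge> 0" using K1 a b by blast+
    ultimately have "f a = 0" "f b = 0" using u
      by (smt (verit) mult_pos_pos mult_nonneg_nonneg)+
    then show "a \<in> T \<and> b \<in> T" using K1 a b by blast
    qed
  qed
qed

theorem lemma1:
  fixes n :: nat and x y :: "nat set set"
  assumes "n \<ge> 4" and "x \<in> PT n" and "y \<in> PT n" and "x \<noteq> y"
  shows "\<not> (closed_segment (char_vec x) (char_vec y) face_of PYR n) \<longleftrightarrow>
         (\<exists>z \<in> PT n. z \<noteq> x \<and> z \<noteq> y \<and> z \<subseteq> x \<union> y)"
proof
  have n3: "3 \<le> n" using assms(1) by linarith
  assume nf: "\<not> (closed_segment (char_vec x) (char_vec y) face_of PYR n)"
  show "\<exists>z \<in> PT n. z \<noteq> x \<and> z \<noteq> y \<and> z \<subseteq> x \<union> y"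
  proof (rule ccontr)
    assume "\<not> ?thesis"
    then have "\<And>z. z \<in> PT n \<Longrightarrow> z \<subseteq> x \<union> y \<Longrightarrow> z = x \<or> z = y" by blast
    then show False using face_if_no_z[OF n3 assms(2-4)] nf by blast
  qed
next
  have n3: "3 \<le> n" using assms(1) by linarith
  assume "\<exists>z \<in> PT n. z \<noteq> x \<and> z \<noteq> y \<and> z \<subseteq> x \<union> y"
  then obtain z where z: "z \<in> PT n" "z \<noteq> x" "z \<noteq> y" "z \<subseteq> x \<union> y" by blast
  obtain U where U: "U \<subseteq> {2..<n}" "x = tour_edges (seqU n U)" using assms(2) PT_eq[OF n3] by auto
  obtain V where V: "V \<subseteq> {2..<n}" "y = tour_edges (seqU n V)" using assms(3) PT_eq[OF n3] by auto
  obtain W where W: "W \<subseteq> {2..<n}" "z = tour_edges (seqU n W)" using z(1) PT_eq[OF n3] by auto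
  define G where "G = {c \<in> {2..<n}. (c \<in> U) \<noteq> ((c \<in> V) \<noteq> (c \<in> W))}"
  define w where "w = tour_edges (seqU n G)"
  have wPT: "w \<in> PT n" unfolding w_def PT_eq[OF n3] G_def by auto
  have ex: "char_vec x + char_vec y = char_vec z + char_vec w"
    unfolding U(2) V(2) W(2) w_def
    by (rule exchange[OF n3 U(1) V(1) W(1) _ G_def]) (use z(4) U V W in simp)
  define X where "X = char_vec x"
  define Y where "Y = char_vec y"
  define Z where "Z = char_vec z"
  define Wv where "Wv = char_vec w"
  define m where "m = (1/2::real) *\<^sub>R (X + Y)"
  have m1: "m = (1 - 1/2) *\<^sub>R X + (1/2::real) *\<^sub>R Y" unfolding m_def by (simp add: scaleR_right_distrib)
  have m2: "m = (1 - 1/2) *\<^sub>R Z + (1/2::real) *\<^sub>R Wv" unfolding m_def X_def Y_def Z_def Wv_def ex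
    by (simp add: scaleR_right_distrib)
  have mT: "m \<in> closed_segment X Y" unfolding in_segment using m1 by (intro exI[of _ "1/2"]) simp
  have ZP: "Z \<in> PYR n" "Wv \<in> PYR n" unfolding PYR_def Z_def Wv_def using z(1) wPT by (auto intro: hull_inc)
  show "\<not> (closed_segment (char_vec x) (char_vec y) face_of PYR n)"
  proof
    assume F: "closed_segment (char_vec x) (char_vec y) face_of PYR n"
    have "Z \<in> closed_segment X Y"
    proof (cases "Z = Wv")
      case True
      then have "m = Z" using m2 by (simp add: scaleR_left_distrib[symmetric])
      then show ?thesis using mT by simp
    next
      case False
      then have "m \<in> open_segment Z Wv" unfolding in_segment using m2 by (intro conjI exI[of _ "1/2"]) auto
      then show ?thesis using face_ofD[OF F _ ZP mT[unfolded X_def Y_def]] unfolding X_def Y_def by blast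
    qed
    then have "z = x \<or> z = y" using seg_01[OF assms(4)] unfolding X_def Y_def Z_def by blast
    then show False using z by blast
  qed
qed

end
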